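(* For $n=1,2,3,4$ the minimal norm of a linear interpolation projector on the unit ball satisfies $\theta_1(B_1)=1$, $\theta_2(B_2)=\frac53$, $\theta_3(B_3)=2$, $\theta_4(B_4)=\frac{11}5$, i.e. $\theta_n(B_n)=3-\frac4{n+1}$; moreover, for $n\le4$ an interpolation projector $P:C(B_n)\to\Pi_1(\mathbb R^n)$ with nodes in $B_n$ satisfies $\|P\|_{B_n}=\theta_n(B_n)$ only if its nodes are the vertices of a regular simplex inscribed into $B_n$.
   Context: $B_n$ is the closed unit Euclidean ball in $\mathbb R^n$. $C(B_n)$ is the space of continuous functions with sup norm; $\Pi_1(\mathbb R^n)$ the space of polynomials of degree $\le1$. For nodes $x^{(1)},\dots,x^{(n+1)}\in B_n$ forming a nondegenerate simplex, the interpolation projector $P$ maps $f$ to the unique $p\in\Pi_1(\mathbb R^n)$ with $p(x^{(j)})=f(x^{(j)})$; $\|P\|_{B_n}$ is its operator norm. $\theta_n(B_n)$ is the minimum of $\|P\|_{B_n}$ over all such projectors. A simplex is inscribed into $B_n$ if its vertices lie on the unit sphere. *)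

theory Defs
  imports "HOL-Analysis.Analysis"
begin

text \<open>Nodes of an interpolation projector on R^n are indexed by j = 0..n, with n = CARD('n).\<close>

definition unit_ball :: "(real^'n) set" where
  "unit_ball = cball 0 1"

definition poly1 :: "(real^'n \<Rightarrow> real) \<Rightarrow> bool" where
  "poly1 p \<longleftrightarrow> (\<exists>a c. \<forall>y. p y = a \<bullet> y + c)"

definition admissible_nodes :: "(nat \<Rightarrow> real^'n) \<Rightarrow> bool" where
  "admissible_nodes x \<longleftrightarrow>
     (\<forall>j\<le>CARD('n). x j \<in> unit_ball) \<and>
     inj_on x {..CARD('n)} \<and>
     \<not> affine_dependent (x ` {..CARD('n)})"

definition interp_proj :: "(nat \<Rightarrow> real^'n) \<Rightarrow> (real^'n \<Rightarrow> real) \<Rightarrow> (real^'n \<Rightarrow> real)" where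
  "interp_proj x f = (THE p. poly1 p \<and> (\<forall>j\<le>CARD('n). p (x j) = f (x j)))"

definition proj_norm :: "(nat \<Rightarrow> real^'n) \<Rightarrow> real" where
  "proj_norm x = Sup {\<bar>interp_proj x f y\<bar> | f y.
      continuous_on unit_ball f \<and> (\<forall>z\<in>unit_ball. \<bar>f z\<bar> \<le> 1) \<and> y \<in> unit_ball}"

definition theta :: "'n::finite itself \<Rightarrow> real" where
  "theta _ = Inf {proj_norm (x :: nat \<Rightarrow> real^'n) | x. admissible_nodes x}"

definition regular_inscribed :: "(nat \<Rightarrow> real^'n) \<Rightarrow> bool" where
  "regular_inscribed x \<longleftrightarrow>
     (\<forall>j\<le>CARD('n). norm (x j) = 1) \<and>
     (\<exists>d. \<forall>i\<le>CARD('n). \<forall>j\<le>CARD('n). i \<noteq> j \<longrightarrow> dist (x i) (x j) = d)"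

end

theory Submission
  imports Defs
begin


definition bary :: "(nat \<Rightarrow> real^'n) \<Rightarrow> (nat \<Rightarrow> real^'n) \<Rightarrow> (nat \<Rightarrow> real) \<Rightarrow> bool" where
  "bary x a c \<longleftrightarrow> (\<forall>j\<le>CARD('n). \<forall>i\<le>CARD('n). a j \<bullet> x i + c j = (if i = j then 1 else 0))"

lemma affine_zero:
  fixes x :: "nat \<Rightarrow> real^'n" and a :: "real^'n"
  assumes adm: "admissible_nodes x" and z: "\<forall>j\<le>CARD('n). a \<bullet> x j + c = 0"
  shows "a \<bullet> y + c = 0"
proof -
  have ind: "\<not> affine_dependent (x ` {..CARD('n)})" and inj: "inj_on x {..CARD('n)}"
    using adm unfolding admissible_nodes_def by auto
  have "card (x ` {..CARD('n)}) = Suc (DIM(real^'n))"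
    using inj by (simp add: card_image)
  hence hull: "affine hull (x ` {..CARD('n)}) = UNIV"
    using affine_independent_span_eq ind by blast
  have "x ` {..CARD('n)} \<subseteq> {y. a \<bullet> y = -c}" using z by (auto simp: algebra_simps)
  hence "affine hull (x ` {..CARD('n)}) \<subseteq> {y. a \<bullet> y = -c}"
    by (intro hull_minimal affine_hyperplane) auto
  hence "y \<in> {y. a \<bullet> y = -c}" using hull by auto
  thus ?thesis by simp
qed

lemma linear_inner_rep:
  fixes g :: "real^'n \<Rightarrow> real"
  assumes "linear g"
  shows "g y = (\<Sum>i\<in>Basis. g i *\<^sub>R i) \<bullet> y"
proof -
  have "g y * 1 = (\<Sum>i\<in>Basis. (y \<bullet> i) * (g i * 1))"
    using Linear_Algebra.linear_componentwise[OF assms, of y 1] by simp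
  thus ?thesis by (simp add: inner_commute[of y] inner_sum_left mult.commute)
qed

lemma bary_exists:
  fixes x :: "nat \<Rightarrow> real^'n"
  assumes adm: "admissible_nodes x"
  shows "\<exists>a c. bary x a c"
proof -
  let ?n = "CARD('n)"
  have ind: "\<not> affine_dependent (x ` {..?n})" and inj: "inj_on x {..?n}"
    using adm unfolding admissible_nodes_def by auto
  have "{..?n} = insert 0 {1..?n}" by auto
  hence eq: "x ` {..?n} = insert (x 0) (x ` {1..?n})" by simp
  have nin: "x 0 \<notin> x ` {1..?n}"
  proof
    assume "x 0 \<in> x ` {1..?n}"
    then obtain i where i: "i \<in> {1..?n}" "x 0 = x i" by auto
    hence "0 = i" using inj_onD[OF inj] by auto
    thus False using i by auto
  qed
  have indep: "independent ((\<lambda>v. - x 0 + v) ` x ` {1..?n})"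
    using ind nin eq affine_dependent_iff_dependent by metis
  have "\<exists>g. linear g \<and> (\<forall>i\<in>{1..?n}. g (- x 0 + x i) = (if i = j then (1::real) else 0))" if "j \<in> {1..?n}" for j
  proof -
    obtain g where g: "linear g" "\<forall>v\<in>((\<lambda>v. - x 0 + v) ` x ` {1..?n}). g v = (if v = - x 0 + x j then (1::real) else 0)"
      using linear_independent_extend[OF indep, of "\<lambda>v. if v = - x 0 + x j then (1::real) else 0"] by blast
    have gi: "g (- x 0 + x i) = (if i = j then 1 else 0)" if "i \<in> {1..?n}" for i
    proof -
      have "(- x 0 + x i = - x 0 + x j) = (i = j)"
        using inj_onD[OF inj, of i j] that \<open>j \<in> _\<close> by auto
      thus ?thesis using g(2) that by auto
    qed
    show ?thesis by (rule exI[of _ g]) (use g(1) gi in auto)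
  qed
  then obtain G where G: "\<And>j. j \<in> {1..?n} \<Longrightarrow> linear (G j) \<and> (\<forall>i\<in>{1..?n}. G j (- x 0 + x i) = (if i = j then (1::real) else 0))"
    by metis
  define a0 where "a0 j = (\<Sum>i\<in>Basis. G j i *\<^sub>R i)" for j
  have Gl: "G j y = a0 j \<bullet> y" if "j \<in> {1..?n}" for j y
    unfolding a0_def by (rule linear_inner_rep) (use G[OF that] in blast)
  define a where "a j = (if j = 0 then - (\<Sum>k\<in>{1..?n}. a0 k) else a0 j)" for j
  define c where "c j = (if j = 0 then 1 + (\<Sum>k\<in>{1..?n}. a0 k \<bullet> x 0) else - (a0 j \<bullet> x 0))" for j
  have lam: "a j \<bullet> y + c j = G j (- x 0 + y)" if "j \<in> {1..?n}" for j y
    using that Gl[OF that, of "- x 0 + y"] by (auto simp: a_def c_def inner_add_right inner_diff_right)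
  have lam0: "a 0 \<bullet> y + c 0 = 1 - (\<Sum>k\<in>{1..?n}. G k (- x 0 + y))" for y
  proof -
    have "(\<Sum>k\<in>{1..?n}. G k (- x 0 + y)) = (\<Sum>k\<in>{1..?n}. a0 k \<bullet> y - a0 k \<bullet> x 0)"
      by (intro sum.cong refl) (simp add: Gl inner_diff_right)
    also have "\<dots> = (\<Sum>k\<in>{1..?n}. a0 k \<bullet> y) - (\<Sum>k\<in>{1..?n}. a0 k \<bullet> x 0)"
      by (simp add: sum_subtractf)
    finally show ?thesis by (simp add: a_def c_def inner_sum_left)
  qed
  have Gx0: "G k (- x 0 + x 0) = 0" if "k \<in> {1..?n}" for k
    using G[OF that] linear_0 by auto
  have "a j \<bullet> x i + c j = (if i = j then 1 else 0)" if "j \<le> ?n" "i \<le> ?n" for i j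
  proof (cases "j = 0")
    case True
    show ?thesis
    proof (cases "i = 0")
      case True thus ?thesis using \<open>j = 0\<close> lam0 Gx0 by simp
    next
      case False
      hence "i \<in> {1..?n}" using that by auto
      hence "(\<Sum>k\<in>{1..?n}. G k (- x 0 + x i)) = (\<Sum>k\<in>{1..?n}. if i = k then 1 else 0)"
        using G by (intro sum.cong) auto
      also have "\<dots> = 1" using \<open>i \<in> _\<close> by simp
      finally show ?thesis using lam0 False True by simp
    qed
  next
    case False
    hence j: "j \<in> {1..?n}" using that by auto
    show ?thesis
    proof (cases "i = 0")
      case True thus ?thesis using lam[OF j] Gx0[OF j] False by simp
    next
      case False
      thus ?thesis using lam[OF j] G[OF j] that by auto
    qed
  qed
  thus ?thesis unfolding bary_def by blast
qed


lemma bary_sum: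
  fixes x :: "nat \<Rightarrow> real^'n"
  assumes adm: "admissible_nodes x" and b: "bary x a c"
  shows "(\<Sum>j\<le>CARD('n). a j \<bullet> y + c j) = 1"
proof -
  have "(\<Sum>j\<le>CARD('n). a j) \<bullet> x i + ((\<Sum>j\<le>CARD('n). c j) - 1) = 0" if "i \<le> CARD('n)" for i
  proof -
    have "(\<Sum>j\<le>CARD('n). a j) \<bullet> x i + (\<Sum>j\<le>CARD('n). c j) = (\<Sum>j\<le>CARD('n). a j \<bullet> x i + c j)"
      by (simp add: inner_sum_left sum.distrib)
    also have "\<dots> = (\<Sum>j\<le>CARD('n). if i = j then 1 else 0)"
      using b that unfolding bary_def by (intro sum.cong) auto
    also have "\<dots> = 1" using that by simp
    finally show ?thesis by simp
  qed
  hence "(\<Sum>j\<le>CARD('n). a j) \<bullet> y + ((\<Sum>j\<le>CARD('n). c j) - 1) = 0"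
    using affine_zero[OF adm] by blast
  thus ?thesis by (simp add: inner_sum_left sum.distrib)
qed

lemma interp_eq:
  fixes x :: "nat \<Rightarrow> real^'n"
  assumes adm: "admissible_nodes x" and b: "bary x a c"
  shows "interp_proj x f = (\<lambda>y. \<Sum>j\<le>CARD('n). f (x j) * (a j \<bullet> y + c j))"
  unfolding interp_proj_def
proof (rule the_equality)
  let ?q = "(\<lambda>y. \<Sum>j\<le>CARD('n). f (x j) * (a j \<bullet> y + c j))"
  have q: "?q y = (\<Sum>j\<le>CARD('n). f (x j) *\<^sub>R a j) \<bullet> y + (\<Sum>j\<le>CARD('n). f (x j) * c j)" for y
    by (simp add: inner_sum_left sum.distrib algebra_simps)
  show "poly1 ?q \<and> (\<forall>j\<le>CARD('n). ?q (x j) = f (x j))"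
  proof
    show "poly1 ?q" unfolding poly1_def using q by blast
    show "\<forall>j\<le>CARD('n). ?q (x j) = f (x j)"
    proof (intro allI impI)
      fix i assume i: "i \<le> CARD('n)"
      have "?q (x i) = (\<Sum>j\<le>CARD('n). f (x j) * (if i = j then 1 else 0))"
        using b i unfolding bary_def by (intro sum.cong) auto
      also have "\<dots> = f (x i)" using i by (simp add: if_distrib cong: if_cong)
      finally show "?q (x i) = f (x i)" .
    qed
  qed
  fix p assume p: "poly1 p \<and> (\<forall>j\<le>CARD('n). p (x j) = f (x j))"
  then obtain a' c' where pa: "\<And>y. p y = a' \<bullet> y + c'" unfolding poly1_def by blast
  have "(a' - (\<Sum>j\<le>CARD('n). f (x j) *\<^sub>R a j)) \<bullet> y + (c' - (\<Sum>j\<le>CARD('n). f (x j) * c j)) = 0" for y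
  proof (rule affine_zero[OF adm], intro allI impI)
    fix i assume i: "i \<le> CARD('n)"
    have "p (x i) = ?q (x i)"
    proof -
      have "?q (x i) = (\<Sum>j\<le>CARD('n). f (x j) * (if i = j then 1 else 0))"
        using b i unfolding bary_def by (intro sum.cong) auto
      also have "\<dots> = f (x i)" using i by (simp add: if_distrib cong: if_cong)
      finally show ?thesis using p i by simp
    qed
    thus "(a' - (\<Sum>j\<le>CARD('n). f (x j) *\<^sub>R a j)) \<bullet> x i + (c' - (\<Sum>j\<le>CARD('n). f (x j) * c j)) = 0"
      using pa[of "x i"] q[of "x i"] by (simp add: inner_diff_left)
  qed
  thus "p = ?q" using pa q by (intro ext) (simp add: inner_diff_left algebra_simps)
qed

lemma interp_bound:
  fixes x :: "nat \<Rightarrow> real^'n"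
  assumes adm: "admissible_nodes x" and b: "bary x a c"
    and f: "\<forall>z\<in>unit_ball. \<bar>f z\<bar> \<le> 1"
  shows "\<bar>interp_proj x f y\<bar> \<le> (\<Sum>j\<le>CARD('n). \<bar>a j \<bullet> y + c j\<bar>)"
proof -
  have "\<bar>interp_proj x f y\<bar> \<le> (\<Sum>j\<le>CARD('n). \<bar>f (x j) * (a j \<bullet> y + c j)\<bar>)"
    unfolding interp_eq[OF adm b] by (rule sum_abs)
  also have "\<dots> \<le> (\<Sum>j\<le>CARD('n). \<bar>a j \<bullet> y + c j\<bar>)"
  proof (rule sum_mono)
    fix j assume "j \<in> {..CARD('n)}"
    hence "x j \<in> unit_ball" using adm unfolding admissible_nodes_def by auto
    hence "\<bar>f (x j)\<bar> \<le> 1" using f by auto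
    thus "\<bar>f (x j) * (a j \<bullet> y + c j)\<bar> \<le> \<bar>a j \<bullet> y + c j\<bar>"
      by (simp add: abs_mult mult_left_le_one_le)
  qed
  finally show ?thesis .
qed

lemma proj_bdd:
  fixes x :: "nat \<Rightarrow> real^'n"
  assumes adm: "admissible_nodes x" and b: "bary x a c"
  shows "bdd_above {\<bar>interp_proj x f y\<bar> | f y.
      continuous_on unit_ball f \<and> (\<forall>z\<in>unit_ball. \<bar>f z\<bar> \<le> 1) \<and> y \<in> unit_ball}"
proof (rule bdd_aboveI[where M="\<Sum>j\<le>CARD('n). norm (a j) + \<bar>c j\<bar>"], clarify)
  fix f :: "real^'n \<Rightarrow> real" and y :: "real^'n"
  assume f: "\<forall>z\<in>unit_ball. \<bar>f z\<bar> \<le> 1" and y: "y \<in> unit_ball"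
  have "\<bar>interp_proj x f y\<bar> \<le> (\<Sum>j\<le>CARD('n). \<bar>a j \<bullet> y + c j\<bar>)"
    by (rule interp_bound[OF adm b f])
  also have "\<dots> \<le> (\<Sum>j\<le>CARD('n). norm (a j) + \<bar>c j\<bar>)"
  proof (rule sum_mono)
    fix j
    have "\<bar>a j \<bullet> y\<bar> \<le> norm (a j) * norm y" by (rule Cauchy_Schwarz_ineq2)
    also have "\<dots> \<le> norm (a j)" using y mult_left_mono[of "norm y" 1 "norm (a j)"] by (simp add: unit_ball_def)
    finally show "\<bar>a j \<bullet> y + c j\<bar> \<le> norm (a j) + \<bar>c j\<bar>" by linarith
  qed
  finally show "\<bar>interp_proj x f y\<bar> \<le> (\<Sum>j\<le>CARD('n). norm (a j) + \<bar>c j\<bar>)" .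
qed

lemma a_ge:
  fixes x :: "nat \<Rightarrow> real^'n"
  assumes adm: "admissible_nodes x" and b: "bary x a c" and j: "j \<le> CARD('n)"
  shows "1 - c j \<le> norm (a j) * norm (x j)" "norm (x j) \<le> 1" "a j \<bullet> x j = 1 - c j"
proof -
  have "a j \<bullet> x j + c j = (if j = j then 1 else 0)" using b j unfolding bary_def by blast
  thus "a j \<bullet> x j = 1 - c j" by simp
  moreover have "a j \<bullet> x j \<le> norm (a j) * norm (x j)" by (rule norm_cauchy_schwarz)
  ultimately show "1 - c j \<le> norm (a j) * norm (x j)" by simp
  show "norm (x j) \<le> 1" using adm j unfolding admissible_nodes_def unit_ball_def by auto
qed

lemma a_nz:
  fixes x :: "nat \<Rightarrow> real^'n"
  assumes adm: "admissible_nodes x" and b: "bary x a c" and j: "j \<le> CARD('n)"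
  shows "a j \<noteq> 0"
proof
  assume "a j = 0"
  define i where "i = (if j = 0 then 1 else 0::nat)"
  have i: "i \<le> CARD('n)" "i \<noteq> j" using j by (auto simp: i_def)
  have "a j \<bullet> x j + c j = 1" "a j \<bullet> x i + c j = 0" using b j i unfolding bary_def by auto
  thus False using \<open>a j = 0\<close> by simp
qed

lemma lower_j:
  fixes x :: "nat \<Rightarrow> real^'n"
  assumes adm: "admissible_nodes x" and b: "bary x a c" and j: "j \<le> CARD('n)"
  shows "1 - 2 * c j + 2 * norm (a j) \<le> proj_norm x"
proof -
  let ?n = "CARD('n)"
  have inj: "inj_on x {..?n}" using adm unfolding admissible_nodes_def by auto
  define D where "D = (\<lambda>i. dist (x i) (x j)) ` ({..?n} - {j})"
  define i0 where "i0 = (if j = 0 then 1 else 0::nat)"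
  have i0: "i0 \<in> {..?n} - {j}" using j by (auto simp: i0_def)
  have Dne: "D \<noteq> {}" "finite D" using i0 by (auto simp: D_def)
  define \<delta> where "\<delta> = Min D"
  have Dpos: "\<forall>d\<in>D. d > 0"
  proof
    fix d assume "d \<in> D"
    then obtain i where i: "i \<in> {..?n} - {j}" "d = dist (x i) (x j)" by (auto simp: D_def)
    have "x i \<noteq> x j" using inj_onD[OF inj, of i j] i j by auto
    thus "d > 0" using i by simp
  qed
  have dpos: "\<delta> > 0" using Dpos Dne Min_in unfolding \<delta>_def by blast
  have dle: "\<delta> \<le> dist (x i) (x j)" if "i \<le> ?n" "i \<noteq> j" for i
    unfolding \<delta>_def using that Dne by (intro Min_le) (auto simp: D_def)
  define f where "f z = max (-1) (min 1 (2 / \<delta> * dist z (x j) - 1))" for z :: "real^'n"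
  have fc: "continuous_on unit_ball f" unfolding f_def by (intro continuous_intros)
  have fb: "\<forall>z\<in>unit_ball. \<bar>f z\<bar> \<le> 1" by (auto simp: f_def)
  have fx: "f (x i) = (if i = j then -1 else 1)" if "i \<le> ?n" for i
  proof (cases "i = j")
    case True thus ?thesis by (simp add: f_def)
  next
    case False
    have "2 / \<delta> * dist (x i) (x j) \<ge> 2 / \<delta> * \<delta>"
      using dle[OF that False] dpos by (intro mult_left_mono) auto
    hence "2 / \<delta> * dist (x i) (x j) \<ge> 2" using dpos by simp
    thus ?thesis using False by (simp add: f_def)
  qed
  have anz: "a j \<noteq> 0" by (rule a_nz[OF adm b j])
  define y where "y = - (1 / norm (a j)) *\<^sub>R a j"
  have yb: "y \<in> unit_ball" using anz by (simp add: y_def unit_ball_def)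
  have ly: "a j \<bullet> y + c j = c j - norm (a j)"
    using anz by (simp add: y_def power2_norm_eq_inner[symmetric] power2_eq_square)
  have "interp_proj x f y = (\<Sum>i\<le>?n. (if i = j then -1 else 1) * (a i \<bullet> y + c i))"
    unfolding interp_eq[OF adm b] by (intro sum.cong refl) (simp add: fx)
  also have "\<dots> = (\<Sum>i\<le>?n. (a i \<bullet> y + c i) - (if i = j then 2 * (a i \<bullet> y + c i) else 0))"
    by (intro sum.cong refl) auto
  also have "\<dots> = 1 - 2 * (a j \<bullet> y + c j)"
    using j by (simp add: sum_subtractf bary_sum[OF adm b])
  finally have val: "interp_proj x f y = 1 - 2 * c j + 2 * norm (a j)" using ly by simp
  have "\<bar>interp_proj x f y\<bar> \<le> proj_norm x"
    unfolding proj_norm_def using fc fb yb by (intro cSup_upper proj_bdd[OF adm b]) blast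
  thus ?thesis using val by linarith
qed


lemma csum:
  fixes x :: "nat \<Rightarrow> real^'n"
  assumes adm: "admissible_nodes x" and b: "bary x a c"
  shows "(\<Sum>j\<le>CARD('n). c j) = 1"
  using bary_sum[OF adm b, of 0] by simp

lemma anorm_ge:
  fixes x :: "nat \<Rightarrow> real^'n"
  assumes adm: "admissible_nodes x" and b: "bary x a c" and j: "j \<le> CARD('n)"
  shows "1 - c j \<le> norm (a j)"
proof -
  have "norm (a j) * norm (x j) \<le> norm (a j) * 1"
    using a_ge(2)[OF adm b j] by (intro mult_left_mono) auto
  thus ?thesis using a_ge(1)[OF adm b j] by simp
qed

lemma lower_all:
  fixes x :: "nat \<Rightarrow> real^'n"
  assumes adm: "admissible_nodes x"
  shows "3 - 4 / (real CARD('n) + 1) \<le> proj_norm x"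
proof -
  obtain a c where b: "bary x a c" using bary_exists[OF adm] by blast
  have "\<exists>j\<le>CARD('n). c j \<le> 1 / (real CARD('n) + 1)"
  proof (rule ccontr)
    assume "\<not> ?thesis"
    hence "\<forall>j\<in>{..CARD('n)}. 1 / (real CARD('n) + 1) < c j" by auto
    hence "(\<Sum>j\<le>CARD('n). 1 / (real CARD('n) + 1)) < (\<Sum>j\<le>CARD('n). c j)"
      by (intro sum_strict_mono) auto
    thus False using csum[OF adm b] by simp
  qed
  then obtain j where j: "j \<le> CARD('n)" "c j \<le> 1 / (real CARD('n) + 1)" by blast
  have "1 - 2 * c j + 2 * norm (a j) \<le> proj_norm x" by (rule lower_j[OF adm b j(1)])
  moreover have "1 - c j \<le> norm (a j)" by (rule anorm_ge[OF adm b j(1)])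
  ultimately show ?thesis using j(2) by linarith
qed

lemma equality_case:
  fixes x :: "nat \<Rightarrow> real^'n"
  assumes adm: "admissible_nodes x" and le: "proj_norm x \<le> 3 - 4 / (real CARD('n) + 1)"
  shows "regular_inscribed x"
proof -
  let ?n = "CARD('n)"
  define r where "r = real ?n / (real ?n + 1)"
  obtain a c where b: "bary x a c" using bary_exists[OF adm] by blast
  have cge: "c j \<ge> 1 / (real ?n + 1)" if j: "j \<le> ?n" for j
  proof -
    have "1 - 2 * c j + 2 * norm (a j) \<le> proj_norm x" by (rule lower_j[OF adm b j])
    moreover have "1 - c j \<le> norm (a j)" by (rule anorm_ge[OF adm b j])
    ultimately show ?thesis using le by linarith
  qed
  have ceq: "c j = 1 / (real ?n + 1)" if j: "j \<le> ?n" for j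
  proof -
    have "(\<Sum>i\<le>?n. c i - 1 / (real ?n + 1)) = 0"
      using csum[OF adm b] by (simp add: sum_subtractf)
    hence "\<forall>i\<in>{..?n}. c i - 1 / (real ?n + 1) = 0"
      using cge by (subst sum_nonneg_eq_0_iff[symmetric]) auto
    thus ?thesis using j by auto
  qed
  have rc: "1 - c j = r" if "j \<le> ?n" for j
    using ceq[OF that] by (simp add: r_def field_simps)
  have rpos: "r > 0" by (simp add: r_def)
  have an: "norm (a j) = r" if j: "j \<le> ?n" for j
  proof -
    have "1 - 2 * c j + 2 * norm (a j) \<le> proj_norm x" by (rule lower_j[OF adm b j])
    moreover have "1 - c j \<le> norm (a j)" by (rule anorm_ge[OF adm b j])
    moreover have "3 - 4 / (real ?n + 1) = 3 - 4 * c j" using ceq[OF j] by simp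
    ultimately show ?thesis using le rc[OF j] by linarith
  qed
  have xn: "norm (x j) = 1" if j: "j \<le> ?n" for j
  proof -
    have "r \<le> r * norm (x j)" using a_ge(1)[OF adm b j] an[OF j] rc[OF j] by simp
    hence "1 \<le> norm (x j)" using rpos by simp
    thus ?thesis using a_ge(2)[OF adm b j] by simp
  qed
  have ax: "a j = r *\<^sub>R x j" if j: "j \<le> ?n" for j
  proof -
    have ip: "a j \<bullet> x j = r" using a_ge(3)[OF adm b j] rc[OF j] by simp
    have "(a j - r *\<^sub>R x j) \<bullet> (a j - r *\<^sub>R x j) = a j \<bullet> a j - 2 * r * (a j \<bullet> x j) + r * r * (x j \<bullet> x j)"
      by (simp add: inner_diff_left inner_diff_right inner_commute algebra_simps)
    also have "\<dots> = 0" using ip an[OF j] xn[OF j]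
      by (simp add: power2_norm_eq_inner[symmetric] power2_eq_square)
    finally show ?thesis by simp
  qed
  have xx: "x j \<bullet> x i = - 1 / real ?n" if "j \<le> ?n" "i \<le> ?n" "i \<noteq> j" for i j
  proof -
    have "a j \<bullet> x i + c j = 0" using b that unfolding bary_def by auto
    hence "r * (x j \<bullet> x i) + 1 / (real ?n + 1) = 0" using ax[OF that(1)] ceq[OF that(1)] by simp
    thus ?thesis by (simp add: r_def field_simps)
  qed
  have "dist (x i) (x j) = sqrt (2 + 2 / real ?n)" if "j \<le> ?n" "i \<le> ?n" "i \<noteq> j" for i j
  proof -
    have "(dist (x i) (x j))\<^sup>2 = (x i - x j) \<bullet> (x i - x j)"
      by (simp add: dist_norm power2_norm_eq_inner)
    also have "\<dots> = x i \<bullet> x i + x j \<bullet> x j - 2 * (x j \<bullet> x i)"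
      by (simp add: inner_diff_left inner_diff_right inner_commute)
    also have "\<dots> = 2 + 2 / real ?n"
      using xx[OF that] xn[OF that(1)] xn[OF that(2)]
      by (simp add: power2_norm_eq_inner[symmetric])
    finally show ?thesis by (simp add: real_sqrt_unique)
  qed
  thus ?thesis unfolding regular_inscribed_def using xn by blast
qed



lemma bary_app:
  fixes x :: "nat \<Rightarrow> real^'n"
  assumes "bary x a c" "j \<le> CARD('n)" "i \<le> CARD('n)"
  shows "a j \<bullet> x i + c j = (if i = j then 1 else 0)"
  using assms unfolding bary_def by simp

lemma bary_inj:
  fixes x :: "nat \<Rightarrow> real^'n"
  assumes b: "bary x a c"
  shows "inj_on x {..CARD('n)}"
proof (rule inj_onI)
  fix i j assume i: "i \<in> {..CARD('n)}" and j: "j \<in> {..CARD('n)}" and e: "x i = x j"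
  have h1: "a i \<bullet> x i + c i = 1" using bary_app[OF b, of i i] i by simp
  have h2: "a i \<bullet> x j + c i = (if j = i then 1 else 0)" using bary_app[OF b, of i j] i j by simp
  show "i = j"
  proof (rule ccontr)
    assume "i \<noteq> j" thus False using h1 h2 e by simp
  qed
qed

lemma bary_indep:
  fixes x :: "nat \<Rightarrow> real^'n"
  assumes b: "bary x a c"
  shows "\<not> affine_dependent (x ` {..CARD('n)})"
proof
  let ?S = "x ` {..CARD('n)}"
  have inj: "inj_on x {..CARD('n)}" by (rule bary_inj[OF b])
  assume "affine_dependent ?S"
  hence "\<exists>U. sum U ?S = 0 \<and> (\<exists>v\<in>?S. U v \<noteq> 0) \<and> (\<Sum>v\<in>?S. U v *\<^sub>R v) = 0"
    using affine_dependent_explicit_finite[of ?S] by simp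
  then obtain U where U: "sum U ?S = 0" "\<exists>v\<in>?S. U v \<noteq> 0" "(\<Sum>v\<in>?S. U v *\<^sub>R v) = 0"
    by blast
  then obtain j where j: "j \<le> CARD('n)" "U (x j) \<noteq> 0" by auto
  have "(\<Sum>w\<in>?S. U w * (a j \<bullet> w + c j)) = (\<Sum>w\<in>?S. U w * (a j \<bullet> w)) + (\<Sum>w\<in>?S. U w * c j)"
    by (simp add: distrib_left sum.distrib)
  also have "(\<Sum>w\<in>?S. U w * (a j \<bullet> w)) = a j \<bullet> (\<Sum>v\<in>?S. U v *\<^sub>R v)"
    by (simp add: inner_sum_right)
  also have "(\<Sum>w\<in>?S. U w * c j) = sum U ?S * c j"
    by (simp add: sum_distrib_right)
  finally have z: "(\<Sum>w\<in>?S. U w * (a j \<bullet> w + c j)) = 0" using U by simp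
  have "(\<Sum>w\<in>?S. U w * (a j \<bullet> w + c j)) = (\<Sum>w\<in>?S. if w = x j then U w else 0)"
  proof (intro sum.cong refl)
    fix w assume "w \<in> ?S"
    then obtain i where i: "i \<le> CARD('n)" "w = x i" by auto
    have h: "a j \<bullet> x i + c j = (if i = j then 1 else 0)" using bary_app[OF b j(1) i(1)] .
    have e: "(x i = x j) = (i = j)" using inj_onD[OF inj, of i j] i j by auto
    show "U w * (a j \<bullet> w + c j) = (if w = x j then U w else 0)"
      unfolding i(2) e h by simp
  qed
  also have "\<dots> = U (x j)" using j by simp
  finally show False using z j by simp
qed

lemma sum_split0:
  fixes F :: "nat \<Rightarrow> real"
  assumes "n \<ge> 1"
  shows "(\<Sum>j\<le>n. F j) = F 0 + (\<Sum>i<n. F (Suc i))"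
proof -
  obtain m where m: "n = Suc m" using assms by (cases n) auto
  have "{..<n} = {..m}" using m by auto
  then show ?thesis using m sum.atMost_Suc_shift[of F m] by simp
qed




lemma key_ineq:
  fixes s :: "'a \<Rightarrow> real"
  assumes fin: "finite I" and card: "card I = n + 1" and n: "1 \<le> n" "n \<le> 4"
    and s0: "(\<Sum>j\<in>I. s j) = 0" and s2: "(\<Sum>j\<in>I. (s j)\<^sup>2) \<le> real n * (real n + 1)"
  shows "(\<Sum>j\<in>I. \<bar>1 + s j\<bar>) \<le> 3 * real n - 1"
proof -
  define N where "N = {j\<in>I. s j < -1}"
  define P where "P = I - N"
  define k where "k = card N"
  define m where "m = card P"
  have fN: "finite N" "finite P" using fin by (auto simp: N_def P_def)
  have NP: "N \<inter> P = {}" "N \<union> P = I" by (auto simp: N_def P_def)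
  have km: "k + m = n + 1" unfolding k_def m_def using card_Un_disjoint[OF fN NP(1)] NP card by simp
  have split: "(\<Sum>j\<in>I. g j) = (\<Sum>j\<in>N. g j) + (\<Sum>j\<in>P. g j)" for g :: "'a \<Rightarrow> real"
    using sum.union_disjoint[OF fN NP(1)] NP(2) by simp
  define A where "A = (\<Sum>j\<in>P. s j)"
  have SN: "(\<Sum>j\<in>N. s j) = - A" using split[of s] s0 A_def by simp
  have absN: "(\<Sum>j\<in>N. \<bar>1 + s j\<bar>) = - real k + A"
  proof -
    have "(\<Sum>j\<in>N. \<bar>1 + s j\<bar>) = (\<Sum>j\<in>N. - 1 - s j)"
      by (intro sum.cong refl) (auto simp: N_def)
    thus ?thesis using SN by (simp add: sum_subtractf k_def)
  qed
  have absP: "(\<Sum>j\<in>P. \<bar>1 + s j\<bar>) = real m + A"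
  proof -
    have "(\<Sum>j\<in>P. \<bar>1 + s j\<bar>) = (\<Sum>j\<in>P. 1 + s j)"
      by (intro sum.cong refl) (auto simp: N_def P_def)
    thus ?thesis by (simp add: sum.distrib m_def A_def)
  qed
  have tot: "(\<Sum>j\<in>I. \<bar>1 + s j\<bar>) = real m - real k + 2 * A"
    using split[of "\<lambda>j. \<bar>1 + s j\<bar>"] absN absP by simp
  have SNle: "(\<Sum>j\<in>N. s j) \<le> - real k"
    using sum_mono[of N s "\<lambda>_. -1"] by (auto simp: N_def k_def)
  hence Ak: "real k \<le> A" using SN by simp
  show ?thesis
  proof (cases "k = 0")
    case True
    hence "N = {}" using fN by (simp add: k_def)
    hence "A = 0" using SN by simp
    have "real k + real m = real n + 1" using arg_cong[OF km, of real] by simp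
    thus ?thesis using tot True \<open>A = 0\<close> n by simp
  next
    case False
    hence k1: "k \<ge> 1" by simp
    show ?thesis
    proof (cases "m = 0")
      case True
      hence "A = 0" using fN by (simp add: m_def A_def)
      moreover have "real k \<ge> 1" using k1 by simp
      ultimately show ?thesis using Ak by linarith
    next
      case False
      hence m1: "m \<ge> 1" by simp
      have c1: "A\<^sup>2 \<le> (\<Sum>j\<in>N. (s j)\<^sup>2) * real k"
        using sum_squared_le_sum_of_squares[of s N] SN by (simp add: k_def)
      have c2: "A\<^sup>2 \<le> (\<Sum>j\<in>P. (s j)\<^sup>2) * real m"
        using sum_squared_le_sum_of_squares[of s P] by (simp add: m_def A_def)
      have "real m * A\<^sup>2 + real k * A\<^sup>2 \<le> real m * real k * ((\<Sum>j\<in>N. (s j)\<^sup>2) + (\<Sum>j\<in>P. (s j)\<^sup>2))"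
      proof -
        have e1: "real m * A\<^sup>2 \<le> real m * ((\<Sum>j\<in>N. (s j)\<^sup>2) * real k)" by (rule mult_left_mono[OF c1]) simp
        have e2: "real k * A\<^sup>2 \<le> real k * ((\<Sum>j\<in>P. (s j)\<^sup>2) * real m)" by (rule mult_left_mono[OF c2]) simp
        have "real m * ((\<Sum>j\<in>N. (s j)\<^sup>2) * real k) + real k * ((\<Sum>j\<in>P. (s j)\<^sup>2) * real m)
            = real m * real k * ((\<Sum>j\<in>N. (s j)\<^sup>2) + (\<Sum>j\<in>P. (s j)\<^sup>2))"
          by (simp add: ring_distribs mult_ac)
        thus ?thesis using e1 e2 by linarith
      qed
      also have "\<dots> \<le> real m * real k * (real n * (real n + 1))"
        using split[of "\<lambda>j. (s j)\<^sup>2"] s2 by (intro mult_left_mono) auto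
      finally have f1: "real m * A\<^sup>2 + real k * A\<^sup>2 \<le> real m * real k * (real n * (real n + 1))" .
      have kmr: "real k + real m = real n + 1" using arg_cong[OF km, of real] by simp
      have "real m * A\<^sup>2 + real k * A\<^sup>2 = (real k + real m) * A\<^sup>2" by (simp add: algebra_simps)
      also have "\<dots> = (real n + 1) * A\<^sup>2" using kmr by simp
      finally have "(real n + 1) * A\<^sup>2 \<le> (real n + 1) * (real m * real k * real n)"
        using f1 by (simp add: algebra_simps)
      hence A2: "A\<^sup>2 \<le> real m * real k * real n"
        by (subst (asm) mult_le_cancel_left_pos) auto
      have nat: "m * k * n \<le> (m + 2 * k - 2)\<^sup>2"
      proof -
        have "k = 1 \<or> k = 2 \<or> k = 3 \<or> k = 4" "m = 1 \<or> m = 2 \<or> m = 3 \<or> m = 4" "k + m \<le> 5"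
          using km n k1 m1 by arith+
        hence "m * k * (k + m - 1) \<le> (m + 2 * k - 2)\<^sup>2" by (elim disjE) (simp_all add: power2_eq_square)
        moreover have "n = k + m - 1" using km by arith
        ultimately show ?thesis by simp
      qed
      have "real m * real k * real n \<le> (real m + 2 * real k - 2)\<^sup>2"
      proof -
        have "real (m * k * n) \<le> real ((m + 2 * k - 2)\<^sup>2)" using nat by linarith
        moreover have "real (m + 2 * k - 2) = real m + 2 * real k - 2" using k1 by simp
        ultimately show ?thesis by simp
      qed
      hence "A\<^sup>2 \<le> (real m + 2 * real k - 2)\<^sup>2" using A2 by linarith
      moreover have "0 \<le> real m + 2 * real k - 2" using k1 m1 by simp
      ultimately have "A \<le> real m + 2 * real k - 2"
        by (rule power2_le_imp_le)
      thus ?thesis using tot kmr by linarith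
    qed
  qed
qed



lemma alg_consts:
  fixes n :: real
  assumes n: "n \<ge> 1"
  defines "s \<equiv> sqrt n"
  defines "\<alpha> \<equiv> sqrt ((n + 1) / n)"
  defines "\<beta> \<equiv> (1 / s - \<alpha>) / n"
  defines "\<gamma> \<equiv> - 1 / s"
  shows "n * \<gamma>\<^sup>2 = 1" "\<gamma> * (\<alpha> + n * \<beta>) = - 1 / n" "2 * \<alpha> * \<beta> + n * \<beta>\<^sup>2 = - 1 / n"
        "\<alpha> * \<alpha> + 2 * \<alpha> * \<beta> + n * \<beta>\<^sup>2 = 1" "\<gamma> + \<alpha> + n * \<beta> = 0" "\<gamma>\<^sup>2 + 2 * \<alpha> * \<beta> + n * \<beta>\<^sup>2 = 0"
        "\<alpha>\<^sup>2 = (n + 1) / n"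
proof -
  have s2: "s\<^sup>2 = n" and sp: "s > 0" using n by (auto simp: s_def)
  have a2: "\<alpha>\<^sup>2 = (n + 1) / n" using n by (simp add: \<alpha>_def)
  have nb: "n * \<beta> = 1 / s - \<alpha>" using n by (simp add: \<beta>_def)
  show g: "n * \<gamma>\<^sup>2 = 1" using s2 sp n by (simp add: \<gamma>_def power_divide)
  have "\<gamma> * (\<alpha> + n * \<beta>) = - 1 / s\<^sup>2" using nb by (simp add: \<gamma>_def power2_eq_square)
  thus "\<gamma> * (\<alpha> + n * \<beta>) = - 1 / n" using s2 by simp
  have q: "2 * \<alpha> * \<beta> + n * \<beta>\<^sup>2 = (1 / s\<^sup>2 - \<alpha>\<^sup>2) / n"
  proof -
    have "2 * \<alpha> * \<beta> + n * \<beta>\<^sup>2 = \<beta> * (2 * \<alpha> + n * \<beta>)" by (simp add: power2_eq_square algebra_simps)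
    also have "\<dots> = ((1 / s - \<alpha>) / n) * (\<alpha> + 1 / s)" using nb by (simp add: \<beta>_def)
    also have "\<dots> = (1 / s\<^sup>2 - \<alpha>\<^sup>2) / n" using sp by (simp add: power2_eq_square field_simps)
    finally show ?thesis .
  qed
  show q2: "2 * \<alpha> * \<beta> + n * \<beta>\<^sup>2 = - 1 / n" using q s2 a2 n by (simp add: field_simps)
  show "\<alpha> * \<alpha> + 2 * \<alpha> * \<beta> + n * \<beta>\<^sup>2 = 1"
  proof -
    have "\<alpha> * \<alpha> + 2 * \<alpha> * \<beta> + n * \<beta>\<^sup>2 = \<alpha>\<^sup>2 + (2 * \<alpha> * \<beta> + n * \<beta>\<^sup>2)" by (simp add: power2_eq_square)
    also have "\<dots> = (n + 1) / n + - 1 / n" using a2 q2 by simp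
    also have "\<dots> = 1" using n by (simp add: field_simps)
    finally show ?thesis .
  qed
  show "\<gamma> + \<alpha> + n * \<beta> = 0" using nb by (simp add: \<gamma>_def)
  have "\<gamma>\<^sup>2 = 1 / n" using g n by (simp add: field_simps)
  thus "\<gamma>\<^sup>2 + 2 * \<alpha> * \<beta> + n * \<beta>\<^sup>2 = 0" using q2 by simp
  show "\<alpha>\<^sup>2 = (n + 1) / n" by (rule a2)
qed


lemma sum_split0':
  fixes F :: "nat \<Rightarrow> real"
  assumes "n \<ge> 1"
  shows "(\<Sum>j\<le>n. F j) = F 0 + (\<Sum>i<n. F (Suc i))"
proof -
  obtain m where m: "n = Suc m" using assms by (cases n) auto
  have "{..<n} = {..m}" using m by auto
  then show ?thesis using m sum.atMost_Suc_shift[of F m] by simp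
qed

lemma regular_exists:
  "\<exists>x :: nat \<Rightarrow> real^'n.
     (\<forall>j\<le>CARD('n). \<forall>i\<le>CARD('n). x j \<bullet> x i = (if i = j then 1 else - 1 / real CARD('n))) \<and>
     (\<forall>y. (\<Sum>j\<le>CARD('n). x j \<bullet> y) = 0) \<and>
     (\<forall>y. (\<Sum>j\<le>CARD('n). (x j \<bullet> y)\<^sup>2) = (real CARD('n) + 1) / real CARD('n) * (y \<bullet> y))"
proof -
  let ?n = "CARD('n)"
  define n where "n = real ?n"
  have n1: "n \<ge> 1" by (simp add: n_def)
  have n1': "?n \<ge> 1" by simp
  obtain h :: "nat \<Rightarrow> 'n" where h: "bij_betw h {0..<?n} UNIV"
    using ex_bij_betw_nat_finite[of "UNIV :: 'n set"] by auto
  have hinj: "i < ?n \<Longrightarrow> l < ?n \<Longrightarrow> (h i = h l) = (i = l)" for i l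
    using h unfolding bij_betw_def inj_on_def by auto
  have reidx: "(\<Sum>i<?n. g (h i)) = (\<Sum>l\<in>UNIV. g l)" for g :: "'n \<Rightarrow> real"
    using sum.reindex_bij_betw[OF h, of g] by (simp add: lessThan_atLeast0)
  define s where "s = sqrt n"
  define \<alpha> where "\<alpha> = sqrt ((n + 1) / n)"
  define \<beta> where "\<beta> = (1 / s - \<alpha>) / n"
  define \<gamma> where "\<gamma> = - 1 / s"
  note A = alg_consts[OF n1, folded s_def, folded \<alpha>_def, folded \<beta>_def, folded \<gamma>_def]
  define S where "S y = (\<Sum>l\<in>UNIV. y $ l)" for y :: "real^'n"
  define x :: "nat \<Rightarrow> real^'n" where
    "x j = (if j = 0 then (\<chi> l. \<gamma>) else (\<chi> l. (if l = h (j - 1) then \<alpha> else 0) + \<beta>))" for j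
  have I0: "x 0 \<bullet> y = \<gamma> * S y" for y
    by (simp add: x_def inner_vec_def S_def sum_distrib_left)
  have I1: "x (Suc i) \<bullet> y = \<alpha> * y $ h i + \<beta> * S y" for i y
  proof -
    have "x (Suc i) \<bullet> y = (\<Sum>l\<in>UNIV. (if l = h i then \<alpha> * y $ l else 0) + \<beta> * y $ l)"
      by (auto simp: x_def inner_vec_def distrib_right intro!: sum.cong)
    also have "\<dots> = \<alpha> * y $ h i + \<beta> * S y"
      by (simp add: sum.distrib S_def sum_distrib_left)
    finally show ?thesis .
  qed
  have Sx0: "S (x 0) = n * \<gamma>" by (simp add: S_def x_def n_def)
  have Sx1: "S (x (Suc i)) = \<alpha> + n * \<beta>" for i
    by (simp add: S_def x_def n_def sum.distrib)
  have x1c: "x (Suc l) $ h i = (if h i = h l then \<alpha> else 0) + \<beta>" for i l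
    by (simp add: x_def)
  have G: "x j \<bullet> x i = (if i = j then 1 else - 1 / n)" if j: "j \<le> ?n" and i: "i \<le> ?n" for i j
  proof (cases j)
    case 0
    show ?thesis
    proof (cases i)
      case 0 thus ?thesis using \<open>j = 0\<close> I0 Sx0 A(1) by (simp add: power2_eq_square mult_ac)
    next
      case (Suc l) thus ?thesis using \<open>j = 0\<close> I0 Sx1 A(2) by simp
    qed
  next
    case (Suc l')
    show ?thesis
    proof (cases i)
      case 0
      have "x j \<bullet> x i = x i \<bullet> x j" by (rule inner_commute)
      thus ?thesis using \<open>j = Suc l'\<close> 0 I0 Sx1 A(2) by simp
    next
      case (Suc l)
      have l: "l < ?n" "l' < ?n" using Suc \<open>j = Suc l'\<close> i j by auto
      have "x j \<bullet> x i = \<alpha> * ((if h l' = h l then \<alpha> else 0) + \<beta>) + \<beta> * (\<alpha> + n * \<beta>)"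
        using I1 x1c Sx1 \<open>j = Suc l'\<close> Suc by simp
      also have "\<dots> = (if i = j then 1 else - 1 / n)"
        using A(3,4) hinj[OF l(2) l(1)] Suc \<open>j = Suc l'\<close>
        by (auto simp: algebra_simps power2_eq_square)
      finally show ?thesis .
    qed
  qed
  have Sum: "(\<Sum>j\<le>?n. x j \<bullet> y) = 0" for y
  proof -
    have "(\<Sum>j\<le>?n. x j \<bullet> y) = x 0 \<bullet> y + (\<Sum>i<?n. x (Suc i) \<bullet> y)"
      by (rule sum_split0'[OF n1'])
    also have "(\<Sum>i<?n. x (Suc i) \<bullet> y) = \<alpha> * (\<Sum>i<?n. y $ h i) + n * \<beta> * S y"
      by (simp add: I1 sum.distrib sum_distrib_left n_def)
    also have "(\<Sum>i<?n. y $ h i) = S y" unfolding S_def by (rule reidx)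
    also have "x 0 \<bullet> y + (\<alpha> * S y + n * \<beta> * S y) = (\<gamma> + \<alpha> + n * \<beta>) * S y"
      using I0 by (simp add: algebra_simps)
    finally show ?thesis using A(5) by simp
  qed
  have Sq: "(\<Sum>j\<le>?n. (x j \<bullet> y)\<^sup>2) = (n + 1) / n * (y \<bullet> y)" for y
  proof -
    have yy: "y \<bullet> y = (\<Sum>l\<in>UNIV. (y $ l)\<^sup>2)" by (simp add: inner_vec_def power2_eq_square)
    have "(\<Sum>j\<le>?n. (x j \<bullet> y)\<^sup>2) = (x 0 \<bullet> y)\<^sup>2 + (\<Sum>i<?n. (x (Suc i) \<bullet> y)\<^sup>2)"
      by (rule sum_split0'[OF n1'])
    also have "(\<Sum>i<?n. (x (Suc i) \<bullet> y)\<^sup>2) =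
        (\<Sum>i<?n. \<alpha>\<^sup>2 * (y $ h i)\<^sup>2 + 2 * \<alpha> * \<beta> * S y * y $ h i + \<beta>\<^sup>2 * (S y)\<^sup>2)"
      by (intro sum.cong refl) (simp add: I1 power2_eq_square algebra_simps)
    also have "\<dots> = \<alpha>\<^sup>2 * (\<Sum>i<?n. (y $ h i)\<^sup>2) + 2 * \<alpha> * \<beta> * S y * (\<Sum>i<?n. y $ h i) + n * \<beta>\<^sup>2 * (S y)\<^sup>2"
      by (simp add: sum.distrib sum_distrib_left n_def)
    also have "(\<Sum>i<?n. (y $ h i)\<^sup>2) = y \<bullet> y" unfolding yy by (rule reidx)
    also have "(\<Sum>i<?n. y $ h i) = S y" unfolding S_def by (rule reidx)
    finally have "(\<Sum>j\<le>?n. (x j \<bullet> y)\<^sup>2) = \<alpha>\<^sup>2 * (y \<bullet> y) + (S y)\<^sup>2 * (\<gamma>\<^sup>2 + 2 * \<alpha> * \<beta> + n * \<beta>\<^sup>2)"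
      using I0 by (simp add: algebra_simps power2_eq_square)
    thus ?thesis using A(6,7) by simp
  qed
  show ?thesis
    apply (rule exI[of _ x])
    using G Sum Sq by (simp add: n_def)
qed



lemma upper_exists:
  assumes "CARD('n::finite) \<le> 4"
  shows "\<exists>x :: nat \<Rightarrow> real^'n. admissible_nodes x \<and> proj_norm x \<le> 3 - 4 / (real CARD('n) + 1)"
proof -
  let ?n = "CARD('n)"
  define n where "n = real ?n"
  have n1: "n \<ge> 1" by (simp add: n_def)
  obtain x :: "nat \<Rightarrow> real^'n" where
    G: "\<forall>j\<le>?n. \<forall>i\<le>?n. x j \<bullet> x i = (if i = j then 1 else - 1 / n)" and
    Sm: "\<forall>y. (\<Sum>j\<le>?n. x j \<bullet> y) = 0" and
    Sq: "\<forall>y. (\<Sum>j\<le>?n. (x j \<bullet> y)\<^sup>2) = (n + 1) / n * (y \<bullet> y)"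
    using regular_exists[where 'n='n] unfolding n_def by blast
  define a where "a j = (n / (n + 1)) *\<^sub>R x j" for j
  define c :: "nat \<Rightarrow> real" where "c j = 1 / (n + 1)" for j
  have b: "bary x a c" unfolding bary_def
  proof (intro allI impI)
    fix j i assume "j \<le> ?n" "i \<le> ?n"
    hence "x j \<bullet> x i = (if i = j then 1 else - 1 / n)" using G by blast
    thus "a j \<bullet> x i + c j = (if i = j then 1 else 0)"
      using n1 by (auto simp: a_def c_def field_simps)
  qed
  have nx: "norm (x j) = 1" if "j \<le> ?n" for j
  proof -
    have "x j \<bullet> x j = 1" using G that by simp
    thus ?thesis by (simp add: norm_eq_sqrt_inner)
  qed
  have adm: "admissible_nodes x"
    unfolding admissible_nodes_def using bary_inj[OF b] bary_indep[OF b] nx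
    by (auto simp: unit_ball_def)
  let ?T = "3 - 4 / (real ?n + 1)"
  let ?X = "{\<bar>interp_proj x f y\<bar> | f y.
      continuous_on unit_ball f \<and> (\<forall>z\<in>unit_ball. \<bar>f z\<bar> \<le> 1) \<and> (y::real^'n) \<in> unit_ball}"
  have ne: "?X \<noteq> {}"
  proof -
    have "\<bar>interp_proj x (\<lambda>_. 0) 0\<bar> \<in> ?X" unfolding unit_ball_def
      by (intro CollectI exI[of _ "\<lambda>_::real^'n. 0::real"] exI[of _ "0::real^'n"]) auto
    thus ?thesis by blast
  qed
  have "proj_norm x \<le> ?T" unfolding proj_norm_def
  proof (rule cSup_least[OF ne], clarify)
    fix f :: "real^'n \<Rightarrow> real" and y :: "real^'n"
    assume f: "\<forall>z\<in>unit_ball. \<bar>f z\<bar> \<le> 1" and y: "y \<in> unit_ball"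
    have "\<bar>interp_proj x f y\<bar> \<le> (\<Sum>j\<le>?n. \<bar>a j \<bullet> y + c j\<bar>)" by (rule interp_bound[OF adm b f])
    also have "\<dots> = (\<Sum>j\<le>?n. \<bar>1 + n * (x j \<bullet> y)\<bar>) / (n + 1)"
    proof -
      have "\<bar>a j \<bullet> y + c j\<bar> = \<bar>1 + n * (x j \<bullet> y)\<bar> / (n + 1)" for j
      proof -
        have "a j \<bullet> y + c j = (1 + n * (x j \<bullet> y)) / (n + 1)"
          using n1 by (simp add: a_def c_def field_simps)
        thus ?thesis using n1 by simp
      qed
      thus ?thesis by (simp add: sum_divide_distrib)
    qed
    also have "\<dots> \<le> (3 * n - 1) / (n + 1)"
    proof (rule divide_right_mono)
      have yy: "y \<bullet> y \<le> 1"
      proof -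
        have "norm y \<le> 1" using y by (simp add: unit_ball_def)
        hence "(norm y)\<^sup>2 \<le> 1" by (simp add: power_le_one)
        thus ?thesis by (simp add: power2_norm_eq_inner)
      qed
      have s0: "(\<Sum>j\<le>?n. n * (x j \<bullet> y)) = 0" using Sm by (simp add: sum_distrib_left[symmetric])
      have "(\<Sum>j\<le>?n. (n * (x j \<bullet> y))\<^sup>2) = n\<^sup>2 * ((n + 1) / n * (y \<bullet> y))"
        using Sq by (simp add: power_mult_distrib sum_distrib_left[symmetric])
      also have "\<dots> = n * (n + 1) * (y \<bullet> y)" using n1 by (simp add: power2_eq_square field_simps)
      also have "\<dots> \<le> n * (n + 1)" using yy n1 by (simp add: mult_left_le)
      finally have s2: "(\<Sum>j\<le>?n. (n * (x j \<bullet> y))\<^sup>2) \<le> real ?n * (real ?n + 1)" by (simp add: n_def)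
      have "(\<Sum>j\<le>?n. \<bar>1 + n * (x j \<bullet> y)\<bar>) \<le> 3 * real ?n - 1"
        by (rule key_ineq[of "{..?n}" ?n, OF _ _ _ assms s0 s2]) auto
      thus "(\<Sum>j\<le>?n. \<bar>1 + n * (x j \<bullet> y)\<bar>) \<le> 3 * n - 1" by (simp add: n_def)
    qed (use n1 in simp)
    also have "\<dots> = ?T" using n1 by (simp add: n_def field_simps)
    finally show "\<bar>interp_proj x f y\<bar> \<le> ?T" .
  qed
  thus ?thesis using adm by blast
qed

theorem mainTheorem14:
  assumes "CARD('n::finite) \<le> 4"
  shows "theta TYPE('n) = 3 - 4 / (real (CARD('n)) + 1) \<and>
         (\<forall>x :: nat \<Rightarrow> real^'n. admissible_nodes x \<and> proj_norm x = theta TYPE('n)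
             \<longrightarrow> regular_inscribed x)"
proof -
  let ?T = "3 - 4 / (real (CARD('n)) + 1)"
  obtain x0 :: "nat \<Rightarrow> real^'n" where x0: "admissible_nodes x0" "proj_norm x0 \<le> ?T"
    using upper_exists[OF assms] by blast
  have "proj_norm x0 = ?T" using x0 lower_all[OF x0(1)] by linarith
  hence mem: "?T \<in> {proj_norm (x :: nat \<Rightarrow> real^'n) | x. admissible_nodes x}"
    using x0(1) by (intro CollectI exI[of _ x0]) auto
  have lb: "\<And>z. z \<in> {proj_norm (x :: nat \<Rightarrow> real^'n) | x. admissible_nodes x} \<Longrightarrow> ?T \<le> z"
    using lower_all by auto
  have th: "theta TYPE('n) = ?T"
    unfolding theta_def by (rule cInf_eq_minimum[OF mem lb])
  show ?thesis
  proof
    show "theta TYPE('n) = ?T" by (rule th)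
    show "\<forall>x :: nat \<Rightarrow> real^'n. admissible_nodes x \<and> proj_norm x = theta TYPE('n) \<longrightarrow> regular_inscribed x"
    proof (intro allI impI)
      fix x :: "nat \<Rightarrow> real^'n"
      assume "admissible_nodes x \<and> proj_norm x = theta TYPE('n)"
      thus "regular_inscribed x" using equality_case[of x] th by simp
    qed
  qed
qed


end
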